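(* Let $(\sigma_1,\dots,\sigma_n)$ and $(\sigma'_1,\dots,\sigma'_n)$ be nonnegative vectors and $\mu_1,\dots,\mu_n\in\mathbb R$. Let $X_1,\dots,X_n$ be independent with $X_i\sim\mathcal N(\mu_i,\sigma_i^2)$ and $Y_1,\dots,Y_n$ be independent with $Y_i\sim\mathcal N(\mu_i,\sigma_i'^2)$. Then $$\Bigl|\mathbb{E}\max_{i\in[n]}X_i-\mathbb{E}\max_{i\in[n]}Y_i\Bigr|\le C\sum_{i\in[n]}|\sigma_i-\sigma_i'|$$ for an absolute constant $C$. *)

theory Defs
  imports "HOL-Probability.Probability"
begin

definition gaussian :: "real \<Rightarrow> real \<Rightarrow> real measure" where
  "gaussian \<mu> \<sigma> =
     (if \<sigma> = 0 then return borel \<mu> else density lborel (normal_density \<mu> \<sigma>))"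

end

theory Submission
  imports Defs
begin

definition SG :: "real measure" where "SG = density lborel std_normal_density"

lemma prob_SG: "prob_space SG"
  unfolding SG_def by (rule prob_space_normal_density) simp

lemma sets_SG[simp]: "sets SG = sets borel" and space_SG[simp]: "space SG = UNIV"
  unfolding SG_def by auto

lemma distr_sets_cong: "sets N = sets N' \<Longrightarrow> distr M N f = distr M N' f"
  by (rule distr_cong) auto

lemma gaussian_affine:
  assumes "0 \<le> \<sigma>"
  shows "distr SG borel (\<lambda>x. \<mu> + \<sigma> * x) = gaussian \<mu> \<sigma>"
proof (cases "\<sigma> = 0")
  case True
  then show ?thesis by (simp add: gaussian_def prob_space.distr_const[OF prob_SG])
next
  case False
  then have s: "\<sigma> > 0" using assms by auto
  interpret prob_space SG by (rule prob_SG)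
  have "distributed SG lborel (\<lambda>x. x) std_normal_density"
    unfolding distributed_def by (auto simp: distr_id2 SG_def)
  from normal_density_affine[OF this, of \<sigma> \<mu>] s
  have "distributed SG lborel (\<lambda>x. \<mu> + \<sigma> * x) (normal_density \<mu> \<sigma>)" by simp
  then have "distr SG lborel (\<lambda>x. \<mu> + \<sigma> * x) = density lborel (normal_density \<mu> \<sigma>)"
    unfolding distributed_def by simp
  then show ?thesis using s by (simp add: gaussian_def distr_sets_cong[of lborel borel])
qed

lemma reduce_Max:
  fixes X :: "nat \<Rightarrow> 'a \<Rightarrow> real" and n :: nat
  assumes "prob_space M" "prob_space.indep_vars M (\<lambda>_. borel) X {..<n}" "n \<ge> 1"
  shows "(\<integral>\<omega>. Max ((\<lambda>i. X i \<omega>) ` {..<n}) \<partial>M) =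
         (\<integral>x. Max ((\<lambda>i. x i) ` {..<n}) \<partial>(PiM {..<n} (\<lambda>i. distr M borel (X i))))"
proof -
  interpret prob_space M by fact
  have rv: "\<And>i. i \<in> {..<n} \<Longrightarrow> random_variable borel (X i)"
    using assms(2) unfolding indep_vars_def by auto
  have "0 \<in> {..<n}" using assms(3) by simp
  then have ne: "{..<n} \<noteq> {}" by blast
  have eq: "distr M (PiM {..<n} (\<lambda>_. borel)) (\<lambda>x. \<lambda>i\<in>{..<n}. X i x) = PiM {..<n} (\<lambda>i. distr M borel (X i))"
    using indep_vars_iff_distr_eq_PiM'[where I="{..<n}" and M'="\<lambda>_. borel" and X=X, OF ne rv] assms(2) by auto
  have meas: "(\<lambda>x. \<lambda>i\<in>{..<n}. X i x) \<in> measurable M (PiM {..<n} (\<lambda>_. borel))"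
    using rv by (auto intro!: measurable_restrict)
  have fm: "(\<lambda>x::nat\<Rightarrow>real. Max ((\<lambda>i. x i) ` {..<n})) \<in> borel_measurable (PiM {..<n} (\<lambda>_. borel))"
    by (intro borel_measurable_Max) auto
  have "(\<integral>x. Max ((\<lambda>i. x i) ` {..<n}) \<partial>(PiM {..<n} (\<lambda>i. distr M borel (X i))))
     = (\<integral>x. Max ((\<lambda>i. x i) ` {..<n}) \<partial>(distr M (PiM {..<n} (\<lambda>_. borel)) (\<lambda>x. \<lambda>i\<in>{..<n}. X i x)))"
    by (simp add: eq)
  also have "\<dots> = (\<integral>\<omega>. Max ((\<lambda>i. (\<lambda>i\<in>{..<n}. X i \<omega>) i) ` {..<n}) \<partial>M)"
    by (rule integral_distr[OF meas fm])
  also have "\<dots> = (\<integral>\<omega>. Max ((\<lambda>i. X i \<omega>) ` {..<n}) \<partial>M)"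
    by (intro Bochner_Integration.integral_cong refl arg_cong[where f=Max] image_cong) auto
  finally show ?thesis ..
qed

definition PS :: "nat \<Rightarrow> (nat \<Rightarrow> real) measure" where "PS n = PiM {..<n} (\<lambda>_. SG)"

lemma PS_prod: "product_prob_space (\<lambda>_. SG)"
proof -
  interpret prob_space SG by (rule prob_SG)
  show ?thesis
    by (auto simp: product_prob_space_def product_prob_space_axioms_def product_sigma_finite_def
        prob_SG sigma_finite_measure_axioms)
qed

lemma prob_PS: "prob_space (PS n)"
proof -
  interpret product_prob_space "\<lambda>_. SG" "{..<n}" by (rule PS_prod)
  show ?thesis unfolding PS_def by unfold_locales
qed

lemma PS_component: "i < n \<Longrightarrow> distr (PS n) borel (\<lambda>z. z i) = SG"
proof -
  assume i: "i < n"
  interpret product_prob_space "\<lambda>_. SG" "{..<n}" by (rule PS_prod)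
  have "distr (PS n) borel (\<lambda>z. z i) = distr (PS n) SG (\<lambda>z. z i)"
    by (rule distr_sets_cong) simp
  also have "\<dots> = SG" unfolding PS_def using i by (intro PiM_component) auto
  finally show ?thesis .
qed

lemma PS_indep: "n \<ge> 1 \<Longrightarrow> prob_space.indep_vars (PS n) (\<lambda>_. borel) (\<lambda>i z. z i) {..<n}"
proof -
  assume n: "n \<ge> 1"
  interpret prob_space "PS n" by (rule prob_PS)
  have "0 \<in> {..<n}" using n by simp
  then have ne: "{..<n} \<noteq> {}" by blast
  have rv: "\<And>i. i \<in> {..<n} \<Longrightarrow> random_variable borel (\<lambda>z. z i)"
    unfolding PS_def
    by (subst measurable_cong_sets[OF refl sets_SG[symmetric]]) (rule measurable_component_singleton, simp)
  have "distr (PS n) (PiM {..<n} (\<lambda>_. borel)) (\<lambda>x. \<lambda>i\<in>{..<n}. x i) = distr (PS n) (PS n) (\<lambda>x. x)"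
  proof (rule distr_cong)
    show "sets (PiM {..<n} (\<lambda>_. borel)) = sets (PS n)"
      unfolding PS_def by (rule sets_PiM_cong) auto
    fix x assume "x \<in> space (PS n)"
    then have "x \<in> PiE {..<n} (\<lambda>_. UNIV)" unfolding PS_def space_PiM by simp
    then show "(\<lambda>i\<in>{..<n}. x i) = x" by (rule PiE_restrict)
  qed simp
  also have "\<dots> = PS n" by simp
  also have "\<dots> = PiM {..<n} (\<lambda>i. distr (PS n) borel (\<lambda>z. z i))"
    unfolding PS_def by (intro PiM_cong refl) (simp add: PS_component[unfolded PS_def])
  finally show ?thesis
    using indep_vars_iff_distr_eq_PiM'[where I="{..<n}" and M'="\<lambda>_. borel" and X="\<lambda>i z. z i", OF ne rv] by simp
qed

lemma gauss_to_PS: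
  fixes n :: nat and \<mu> \<sigma> :: "nat \<Rightarrow> real"
  assumes n: "n \<ge> 1" and s: "\<forall>i<n. 0 \<le> \<sigma> i"
  shows "(\<integral>x. Max ((\<lambda>i. x i) ` {..<n}) \<partial>(PiM {..<n} (\<lambda>i. gaussian (\<mu> i) (\<sigma> i))))
       = (\<integral>z. Max ((\<lambda>i. \<mu> i + \<sigma> i * z i) ` {..<n}) \<partial>PS n)"
proof -
  interpret prob_space "PS n" by (rule prob_PS)
  have ind: "indep_vars (\<lambda>_. borel) (\<lambda>i z. \<mu> i + \<sigma> i * z i) {..<n}"
    using indep_vars_compose2[OF PS_indep[OF n], where Y="\<lambda>i x. \<mu> i + \<sigma> i * x" and N="\<lambda>_. borel"]
    by simp
  have d: "distr (PS n) borel (\<lambda>z. \<mu> i + \<sigma> i * z i) = gaussian (\<mu> i) (\<sigma> i)" if i: "i < n" for i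
  proof -
    have m: "(\<lambda>z. z i) \<in> measurable (PS n) borel"
      unfolding PS_def
      by (subst measurable_cong_sets[OF refl sets_SG[symmetric]]) (rule measurable_component_singleton, use i in simp)
    have "distr (PS n) borel (\<lambda>z. \<mu> i + \<sigma> i * z i) = distr (distr (PS n) borel (\<lambda>z. z i)) borel (\<lambda>x. \<mu> i + \<sigma> i * x)"
      by (subst distr_distr[OF _ m]) (auto simp: comp_def)
    also have "\<dots> = gaussian (\<mu> i) (\<sigma> i)"
      using PS_component[OF i] gaussian_affine s i by simp
    finally show ?thesis .
  qed
  have "PiM {..<n} (\<lambda>i. gaussian (\<mu> i) (\<sigma> i)) = PiM {..<n} (\<lambda>i. distr (PS n) borel (\<lambda>z. \<mu> i + \<sigma> i * z i))"
    by (intro PiM_cong refl) (simp add: d)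
  then show ?thesis using reduce_Max[OF prob_PS ind n] by simp
qed

lemma PS_meas: "i < n \<Longrightarrow> (\<lambda>z. z i) \<in> borel_measurable (PS n)"
  unfolding PS_def
  by (subst measurable_cong_sets[OF refl sets_SG[symmetric]]) (rule measurable_component_singleton, simp)

lemma SG_abs: "integrable SG abs" "(\<integral>x. \<bar>x\<bar> \<partial>SG) \<le> 1"
proof -
  show "integrable SG abs"
    unfolding SG_def
    using integrable_std_normal_moment_abs[of 1]
    by (subst integrable_density) auto
  have "(\<integral>x. \<bar>x\<bar> \<partial>SG) = (\<integral>x. std_normal_density x * \<bar>x\<bar>^(2*0+1) \<partial>lborel)"
    unfolding SG_def by (subst integral_density) auto
  also have "\<dots> = sqrt (2 / pi)"
    by (subst integral_std_normal_moment_abs_odd) simp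
  also have "\<dots> \<le> 1"
    using pi_gt3 by (simp add: real_sqrt_le_1_iff)
  finally show "(\<integral>x. \<bar>x\<bar> \<partial>SG) \<le> 1" .
qed

lemma PS_abs:
  assumes i: "i < n"
  shows "integrable (PS n) (\<lambda>z. \<bar>z i\<bar>)" "(\<integral>z. \<bar>z i\<bar> \<partial>PS n) \<le> 1"
proof -
  have e1: "integrable (distr (PS n) borel (\<lambda>z. z i)) abs \<longleftrightarrow> integrable (PS n) (\<lambda>z. \<bar>z i\<bar>)"
    by (rule integrable_distr_eq[OF PS_meas[OF i]]) simp
  show "integrable (PS n) (\<lambda>z. \<bar>z i\<bar>)"
    using e1 SG_abs(1) PS_component[OF i] by simp
  have "(\<integral>z. \<bar>z i\<bar> \<partial>PS n) = (\<integral>x. \<bar>x\<bar> \<partial>distr (PS n) borel (\<lambda>z. z i))"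
    by (rule integral_distr[OF PS_meas[OF i], symmetric]) simp
  then show "(\<integral>z. \<bar>z i\<bar> \<partial>PS n) \<le> 1"
    using SG_abs(2) PS_component[OF i] by simp
qed

lemma max_diff_le:
  fixes a b :: "nat \<Rightarrow> real"
  assumes "finite I" "I \<noteq> {}"
  shows "Max (a ` I) - Max (b ` I) \<le> (\<Sum>i\<in>I. \<bar>a i - b i\<bar>)"
proof -
  have "Max (a ` I) \<in> a ` I" using assms by (intro Max_in) auto
  then obtain j where j: "j \<in> I" "Max (a ` I) = a j" by auto
  have "b j \<le> Max (b ` I)" using assms j by (intro Max_ge) auto
  moreover have "\<bar>a j - b j\<bar> \<le> (\<Sum>i\<in>I. \<bar>a i - b i\<bar>)"
    using assms j by (intro member_le_sum) auto
  ultimately show ?thesis using j by linarith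
qed

lemma max_abs_diff_le:
  fixes a b :: "nat \<Rightarrow> real"
  assumes "finite I" "I \<noteq> {}"
  shows "\<bar>Max (a ` I) - Max (b ` I)\<bar> \<le> (\<Sum>i\<in>I. \<bar>a i - b i\<bar>)"
  using max_diff_le[OF assms, of a b] max_diff_le[OF assms, of b a]
  by (simp add: abs_minus_commute)

lemma max_abs_le:
  fixes a :: "nat \<Rightarrow> real"
  assumes "finite I" "I \<noteq> {}"
  shows "\<bar>Max (a ` I)\<bar> \<le> (\<Sum>i\<in>I. \<bar>a i\<bar>)"
  using max_abs_diff_le[OF assms, of a "\<lambda>_. 0"] assms by simp

lemma int_Max:
  assumes n: "n \<ge> 1"
  shows "integrable (PS n) (\<lambda>z. Max ((\<lambda>i. \<mu> i + \<sigma> i * z i) ` {..<n}))"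
proof (rule Bochner_Integration.integrable_bound)
  have "0 \<in> {..<n}" using n by simp
  then have ne: "{..<n} \<noteq> {}" by blast
  show "integrable (PS n) (\<lambda>z. \<Sum>i<n. \<bar>\<mu> i\<bar> + \<bar>\<sigma> i\<bar> * \<bar>z i\<bar>)"
    using PS_abs(1) by (intro Bochner_Integration.integrable_sum Bochner_Integration.integrable_add
        integrable_mult_right) (auto simp: finite_measure.integrable_const[OF prob_space.axioms(1)[OF prob_PS]])
  show "(\<lambda>z. Max ((\<lambda>i. \<mu> i + \<sigma> i * z i) ` {..<n})) \<in> borel_measurable (PS n)"
    by (intro borel_measurable_Max borel_measurable_add borel_measurable_const
        borel_measurable_times PS_meas) auto
  show "AE z in PS n. norm (Max ((\<lambda>i. \<mu> i + \<sigma> i * z i) ` {..<n})) \<le> norm (\<Sum>i<n. \<bar>\<mu> i\<bar> + \<bar>\<sigma> i\<bar> * \<bar>z i\<bar>)"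
  proof (intro AE_I2)
    fix z
    have "\<bar>Max ((\<lambda>i. \<mu> i + \<sigma> i * z i) ` {..<n})\<bar> \<le> (\<Sum>i<n. \<bar>\<mu> i + \<sigma> i * z i\<bar>)"
      using max_abs_le[OF _ ne] by simp
    also have "\<dots> \<le> (\<Sum>i<n. \<bar>\<mu> i\<bar> + \<bar>\<sigma> i\<bar> * \<bar>z i\<bar>)"
      by (intro sum_mono) (simp add: abs_triangle_ineq[THEN order_trans] abs_mult)
    also have "\<dots> \<le> \<bar>\<Sum>i<n. \<bar>\<mu> i\<bar> + \<bar>\<sigma> i\<bar> * \<bar>z i\<bar>\<bar>" by simp
    finally show "norm (Max ((\<lambda>i. \<mu> i + \<sigma> i * z i) ` {..<n})) \<le> norm (\<Sum>i<n. \<bar>\<mu> i\<bar> + \<bar>\<sigma> i\<bar> * \<bar>z i\<bar>)"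
      by simp
  qed
qed

theorem lemma2:
  shows "\<exists>C::real. \<forall>(n::nat) (\<mu>::nat \<Rightarrow> real) (\<sigma>::nat \<Rightarrow> real) (\<sigma>'::nat \<Rightarrow> real)
            (M::'a measure) (X::nat \<Rightarrow> 'a \<Rightarrow> real) (N::'b measure) (Y::nat \<Rightarrow> 'b \<Rightarrow> real).
     n \<ge> 1 \<and> (\<forall>i<n. 0 \<le> \<sigma> i \<and> 0 \<le> \<sigma>' i) \<and>
     prob_space M \<and> prob_space.indep_vars M (\<lambda>_. borel) X {..<n} \<and>
     (\<forall>i<n. distr M borel (X i) = gaussian (\<mu> i) (\<sigma> i)) \<and>
     prob_space N \<and> prob_space.indep_vars N (\<lambda>_. borel) Y {..<n} \<and>
     (\<forall>i<n. distr N borel (Y i) = gaussian (\<mu> i) (\<sigma>' i))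
     \<longrightarrow> \<bar>(\<integral>\<omega>. Max ((\<lambda>i. X i \<omega>) ` {..<n}) \<partial>M) - (\<integral>\<omega>. Max ((\<lambda>i. Y i \<omega>) ` {..<n}) \<partial>N)\<bar>
         \<le> C * (\<Sum>i<n. \<bar>\<sigma> i - \<sigma>' i\<bar>)"
proof (intro exI[of _ 1] allI impI)
  fix n :: nat and \<mu> \<sigma> \<sigma>' :: "nat \<Rightarrow> real" and M :: "'a measure" and X :: "nat \<Rightarrow> 'a \<Rightarrow> real"
    and N :: "'b measure" and Y :: "nat \<Rightarrow> 'b \<Rightarrow> real"
  assume H: "n \<ge> 1 \<and> (\<forall>i<n. 0 \<le> \<sigma> i \<and> 0 \<le> \<sigma>' i) \<and>
     prob_space M \<and> prob_space.indep_vars M (\<lambda>_. borel) X {..<n} \<and>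
     (\<forall>i<n. distr M borel (X i) = gaussian (\<mu> i) (\<sigma> i)) \<and>
     prob_space N \<and> prob_space.indep_vars N (\<lambda>_. borel) Y {..<n} \<and>
     (\<forall>i<n. distr N borel (Y i) = gaussian (\<mu> i) (\<sigma>' i))"
  then have n: "n \<ge> 1" and s: "\<forall>i<n. 0 \<le> \<sigma> i" and s': "\<forall>i<n. 0 \<le> \<sigma>' i"
    and pM: "prob_space M" and iX: "prob_space.indep_vars M (\<lambda>_. borel) X {..<n}"
    and dX: "\<forall>i<n. distr M borel (X i) = gaussian (\<mu> i) (\<sigma> i)"
    and pN: "prob_space N" and iY: "prob_space.indep_vars N (\<lambda>_. borel) Y {..<n}"
    and dY: "\<forall>i<n. distr N borel (Y i) = gaussian (\<mu> i) (\<sigma>' i)"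
    by auto
  have "0 \<in> {..<n}" using n by simp
  then have ne: "{..<n} \<noteq> {}" by blast
  define A where "A = (\<lambda>z::nat\<Rightarrow>real. Max ((\<lambda>i. \<mu> i + \<sigma> i * z i) ` {..<n}))"
  define B where "B = (\<lambda>z::nat\<Rightarrow>real. Max ((\<lambda>i. \<mu> i + \<sigma>' i * z i) ` {..<n}))"
  have "PiM {..<n} (\<lambda>i. distr M borel (X i)) = PiM {..<n} (\<lambda>i. gaussian (\<mu> i) (\<sigma> i))"
    by (intro PiM_cong refl) (simp add: dX)
  then have eX: "(\<integral>\<omega>. Max ((\<lambda>i. X i \<omega>) ` {..<n}) \<partial>M) = (\<integral>z. A z \<partial>PS n)"
    using reduce_Max[OF pM iX n] gauss_to_PS[OF n s, of \<mu>] by (simp add: A_def)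
  have "PiM {..<n} (\<lambda>i. distr N borel (Y i)) = PiM {..<n} (\<lambda>i. gaussian (\<mu> i) (\<sigma>' i))"
    by (intro PiM_cong refl) (simp add: dY)
  then have eY: "(\<integral>\<omega>. Max ((\<lambda>i. Y i \<omega>) ` {..<n}) \<partial>N) = (\<integral>z. B z \<partial>PS n)"
    using reduce_Max[OF pN iY n] gauss_to_PS[OF n s', of \<mu>] by (simp add: B_def)
  have iA: "integrable (PS n) A" unfolding A_def by (rule int_Max[OF n])
  have iB: "integrable (PS n) B" unfolding B_def by (rule int_Max[OF n])
  have iG: "integrable (PS n) (\<lambda>z. \<Sum>i<n. \<bar>\<sigma> i - \<sigma>' i\<bar> * \<bar>z i\<bar>)"
    using PS_abs(1) by (intro Bochner_Integration.integrable_sum integrable_mult_right) auto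
  have "\<bar>(\<integral>z. A z \<partial>PS n) - (\<integral>z. B z \<partial>PS n)\<bar> = \<bar>\<integral>z. A z - B z \<partial>PS n\<bar>"
    using iA iB by simp
  also have "\<dots> \<le> (\<integral>z. \<bar>A z - B z\<bar> \<partial>PS n)"
    using integral_norm_bound[of "PS n" "\<lambda>z. A z - B z"] by simp
  also have "\<dots> \<le> (\<integral>z. (\<Sum>i<n. \<bar>\<sigma> i - \<sigma>' i\<bar> * \<bar>z i\<bar>) \<partial>PS n)"
  proof (rule integral_mono)
    show "integrable (PS n) (\<lambda>z. \<bar>A z - B z\<bar>)" using iA iB by auto
    show "integrable (PS n) (\<lambda>z. \<Sum>i<n. \<bar>\<sigma> i - \<sigma>' i\<bar> * \<bar>z i\<bar>)" by (rule iG)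
    fix z
    have "\<bar>A z - B z\<bar> \<le> (\<Sum>i<n. \<bar>(\<mu> i + \<sigma> i * z i) - (\<mu> i + \<sigma>' i * z i)\<bar>)"
      unfolding A_def B_def by (rule max_abs_diff_le[OF _ ne]) simp
    also have "\<dots> = (\<Sum>i<n. \<bar>\<sigma> i - \<sigma>' i\<bar> * \<bar>z i\<bar>)"
      by (intro sum.cong refl) (simp add: abs_mult[symmetric] algebra_simps)
    finally show "\<bar>A z - B z\<bar> \<le> (\<Sum>i<n. \<bar>\<sigma> i - \<sigma>' i\<bar> * \<bar>z i\<bar>)" .
  qed
  also have "\<dots> = (\<Sum>i<n. \<bar>\<sigma> i - \<sigma>' i\<bar> * (\<integral>z. \<bar>z i\<bar> \<partial>PS n))"
  proof -
    have "(\<integral>z. (\<Sum>i<n. \<bar>\<sigma> i - \<sigma>' i\<bar> * \<bar>z i\<bar>) \<partial>PS n) = (\<Sum>i<n. (\<integral>z. \<bar>\<sigma> i - \<sigma>' i\<bar> * \<bar>z i\<bar> \<partial>PS n))"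
      by (rule Bochner_Integration.integral_sum[where f="\<lambda>i z. \<bar>\<sigma> i - \<sigma>' i\<bar> * \<bar>z i\<bar>"]) (use PS_abs(1) in auto)
    then show ?thesis by simp
  qed
  also have "\<dots> \<le> (\<Sum>i<n. \<bar>\<sigma> i - \<sigma>' i\<bar> * 1)"
    using PS_abs(2) by (intro sum_mono mult_left_mono) auto
  finally show "\<bar>(\<integral>\<omega>. Max ((\<lambda>i. X i \<omega>) ` {..<n}) \<partial>M) - (\<integral>\<omega>. Max ((\<lambda>i. Y i \<omega>) ` {..<n}) \<partial>N)\<bar>
         \<le> 1 * (\<Sum>i<n. \<bar>\<sigma> i - \<sigma>' i\<bar>)"
    using eX eY by simp
qed

end
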